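(* Every deterministic max-finding algorithm with error $k$ requires $\Omega(n^{1+1/(2^k-1)})$ comparisons on $n$ elements (in the worst case).
   Context: Model of imprecise comparisons: there are $n$ elements, each with a fixed unknown real value; we identify an element with its value. Asked to compare $x_i$ and $x_j$, the comparator answers either "$x_i \ge x_j$" or "$x_j \ge x_i$". If $|x_i-x_j|>1$ the answer is correct; if $|x_i-x_j|\le 1$ the answer is arbitrary (possibly adversarial and adaptive). A max-finding algorithm has error $k$ if for every input and every consistent comparator behaviour its output $x$ satisfies $x \ge x^*-k$, where $x^*$ is the maximum value of an input element. *)

theory Defs
  imports Complex_Main
begin

text \<open>A deterministic (adaptive) comparison algorithm on elements indexed 0..n-1 is a
decision tree. Node Cmp i j T F asks the comparator about x_i and x_j; the answer
"x_i \<ge> x_j" leads to T, the answer "x_j \<ge> x_i" leads to F.\<close>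

datatype alg = Leaf nat | Cmp nat nat alg alg

fun wf_alg :: "nat \<Rightarrow> alg \<Rightarrow> bool" where
  "wf_alg n (Leaf m) = (m < n)"
| "wf_alg n (Cmp i j t f) = (i < n \<and> j < n \<and> wf_alg n t \<and> wf_alg n f)"

definition ans_ok :: "(nat \<Rightarrow> real) \<Rightarrow> nat \<Rightarrow> nat \<Rightarrow> bool \<Rightarrow> bool" where
  "ans_ok x i j b = (\<bar>x i - x j\<bar> \<le> 1 \<or> (if b then x i \<ge> x j else x j \<ge> x i))"

text \<open>run x A m c: for input values x, some consistent (possibly adversarial, adaptive)
comparator behaviour drives A to output element m after exactly c comparisons.\<close>

inductive run :: "(nat \<Rightarrow> real) \<Rightarrow> alg \<Rightarrow> nat \<Rightarrow> nat \<Rightarrow> bool" where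
  run_leaf: "run x (Leaf m) m 0"
| run_true: "ans_ok x i j True \<Longrightarrow> run x t m c \<Longrightarrow> run x (Cmp i j t f) m (Suc c)"
| run_false: "ans_ok x i j False \<Longrightarrow> run x f m c \<Longrightarrow> run x (Cmp i j t f) m (Suc c)"

definition max_error :: "nat \<Rightarrow> real \<Rightarrow> alg \<Rightarrow> bool" where
  "max_error n k A = (\<forall>x m c. run x A m c \<longrightarrow> x m \<ge> Max (x ` {..<n}) - k)"

end

theory Submission
  imports Defs
begin

definition deg :: "(nat \<times> nat) list \<Rightarrow> nat \<Rightarrow> nat" where
  "deg h v = length (filter (\<lambda>p. fst p = v) h) + length (filter (\<lambda>p. snd p = v) h)"

lemma deg_Nil[simp]: "deg [] v = 0" by (simp add: deg_def)
lemma deg_Cons: "deg ((a,b)#h) v = deg h v + (if a = v then 1 else 0) + (if b = v then 1 else 0)"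
  by (simp add: deg_def)

fun adv :: "alg \<Rightarrow> (nat \<times> nat) list \<Rightarrow> nat \<times> (nat \<times> nat) list" where
  "adv (Leaf m) h = (m, h)"
| "adv (Cmp i j t f) h = (if deg h i \<le> deg h j then adv t ((i,j)#h) else adv f ((j,i)#h))"

fun good :: "(nat \<times> nat) list \<Rightarrow> bool" where
  "good [] = True"
| "good ((a,b)#h) = (good h \<and> deg h a \<le> deg h b)"

lemma adv_good: "good h \<Longrightarrow> good (snd (adv A h))"
  by (induction A h rule: adv.induct) auto

lemma adv_suffix: "\<exists>h'. snd (adv A h) = h' @ h"
  apply (induction A h rule: adv.induct)
   apply simp
  apply (simp split: if_splits)
  by (metis append.assoc append_Cons append_Nil)

lemma adv_wf: "wf_alg n A \<Longrightarrow> (\<forall>p\<in>set h. fst p < n \<and> snd p < n) \<Longrightarrow>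
   fst (adv A h) < n \<and> (\<forall>p\<in>set (snd (adv A h)). fst p < n \<and> snd p < n)"
  by (induction A h rule: adv.induct) auto

lemma adv_run:
  "(\<forall>p\<in>set (snd (adv A h)). x (snd p) \<le> x (fst p) + 1) \<Longrightarrow>
   run x A (fst (adv A h)) (length (snd (adv A h)) - length h)"
proof (induction A h rule: adv.induct)
  case (1 m h)
  then show ?case by (simp add: run_leaf)
next
  case (2 i j t f h)
  show ?case
  proof (cases "deg h i \<le> deg h j")
    case True
    obtain h' where h': "snd (adv t ((i,j)#h)) = h' @ (i,j) # h" using adv_suffix by blast
    have r: "run x t (fst (adv t ((i,j)#h))) (length (snd (adv t ((i,j)#h))) - length ((i,j)#h))"
      using 2 True by simp
    have ok: "ans_ok x i j True" using 2(3) True h' by (auto simp: ans_ok_def)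
    have "length (snd (adv t ((i,j)#h))) - length h = Suc (length (snd (adv t ((i,j)#h))) - length ((i,j)#h))"
      using h' by simp
    then show ?thesis using True run_true[OF ok r] by simp
  next
    case False
    obtain h' where h': "snd (adv f ((j,i)#h)) = h' @ (j,i) # h" using adv_suffix by blast
    have r: "run x f (fst (adv f ((j,i)#h))) (length (snd (adv f ((j,i)#h))) - length ((j,i)#h))"
      using 2 False by simp
    have ok: "ans_ok x i j False" using 2(3) False h' by (auto simp: ans_ok_def)
    have "length (snd (adv f ((j,i)#h))) - length h = Suc (length (snd (adv f ((j,i)#h))) - length ((j,i)#h))"
      using h' by simp
    then show ?thesis using False run_false[OF ok r] by simp
  qed
qed

definition vict :: "(nat \<times> nat) list \<Rightarrow> nat \<Rightarrow> nat set" where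
  "vict h w = {v. (w,v) \<in> set h}"

lemma vict_finite: "finite (vict h w)"
proof -
  have "vict h w \<subseteq> snd ` set h" by (force simp: vict_def)
  then show ?thesis by (meson finite_imageI finite_set finite_subset)
qed

lemma card_vict: "card (vict h w) \<le> deg h w"
proof -
  have "vict h w = snd ` set (filter (\<lambda>p. fst p = w) h)" by (force simp: vict_def)
  then have "card (vict h w) \<le> card (set (filter (\<lambda>p. fst p = w) h))"
    by (simp add: card_image_le)
  also have "\<dots> \<le> length (filter (\<lambda>p. fst p = w) h)" by (rule card_length)
  finally show ?thesis by (simp add: deg_def)
qed

lemma deg_mono_Cons: "deg h v \<le> deg ((a,b)#h) v" by (simp add: deg_Cons)

lemma vict_bound: "good h \<Longrightarrow> card {v \<in> vict h w. deg h v \<le> t} \<le> t"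
proof (induction h arbitrary: t rule: good.induct)
  case 1
  then show ?case by (simp add: vict_def)
next
  case (2 a b h)
  let ?h = "(a,b)#h"
  have IH: "card {v \<in> vict h w. deg h v \<le> t} \<le> t" using 2 by simp
  have le: "deg h a \<le> deg h b" using 2 by simp
  have fin: "finite {v \<in> vict h w. deg h v \<le> t}" using vict_finite by simp
  show ?case
  proof (cases "a = w \<and> b \<notin> vict h w \<and> deg ?h b \<le> t")
    case False
    have "{v \<in> vict ?h w. deg ?h v \<le> t} \<subseteq> {v \<in> vict h w. deg h v \<le> t}"
      using False deg_mono_Cons[of h _ a b] by (auto simp: vict_def intro: le_trans)
    then show ?thesis using IH card_mono[OF fin] le_trans by blast
  next
    case True
    have "{v \<in> vict ?h w. deg ?h v \<le> t} \<subseteq> insert b (vict h w)"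
      using True by (auto simp: vict_def)
    then have "card {v \<in> vict ?h w. deg ?h v \<le> t} \<le> card (insert b (vict h w))"
      by (simp add: card_mono vict_finite)
    also have "\<dots> = Suc (card (vict h w))" using True vict_finite by simp
    also have "\<dots> \<le> Suc (deg h a)" using card_vict True by simp
    also have "\<dots> \<le> t"
    proof -
      have "deg ?h b \<ge> Suc (deg h b)" by (simp add: deg_Cons)
      then show ?thesis using True le by linarith
    qed
    finally show ?thesis .
  qed
qed

lemma vict_bound_real:
  assumes "good h" "s > 0"
  shows "real (card {v \<in> vict h w. real (deg h v) < s}) \<le> s"
proof -
  define t where "t = nat (ceiling s) - 1"
  have sub: "{v \<in> vict h w. real (deg h v) < s} \<subseteq> {v \<in> vict h w. deg h v \<le> t}"
    
  proof
    fix v assume v: "v \<in> {v \<in> vict h w. real (deg h v) < s}"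
    then have "int (deg h v) < ceiling s" by (simp, linarith)
    then have "deg h v \<le> t" unfolding t_def by linarith
    then show "v \<in> {v \<in> vict h w. deg h v \<le> t}" using v by simp
  qed
  then have "card {v \<in> vict h w. real (deg h v) < s} \<le> t"
    using vict_bound[OF assms(1), of w t] card_mono[OF _ sub] vict_finite
    by (metis (no_types, lifting) finite_subset le_trans mem_Collect_eq subsetI)
  moreover have "real t \<le> s" unfolding t_def using assms(2) by linarith
  ultimately show ?thesis by linarith
qed

lemma sum_deg: "finite V \<Longrightarrow> (\<Sum>v\<in>V. deg h v) \<le> 2 * length h"
proof (induction h)
  case Nil
  then show ?case by simp
next
  case (Cons p h)
  obtain a b where p: "p = (a,b)" by fastforce
  have "(\<Sum>v\<in>V. deg (p#h) v) = (\<Sum>v\<in>V. deg h v) + (\<Sum>v\<in>V. (if a = v then 1 else 0)) + (\<Sum>v\<in>V. (if b = v then 1 else 0))"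
    by (simp add: p deg_Cons sum.distrib)
  also have "(\<Sum>v\<in>V. (if a = v then 1 else 0::nat)) \<le> 1" using Cons.prems by (simp add: sum.If_cases)
  also have "(\<Sum>v\<in>V. (if b = v then 1 else 0::nat)) \<le> 1" using Cons.prems by (simp add: sum.If_cases)
  finally show ?case using Cons by simp
qed


fun R :: "(nat \<times> nat) list \<Rightarrow> nat \<Rightarrow> nat \<Rightarrow> nat set" where
  "R h m 0 = {m}"
| "R h m (Suc j) = R h m j \<union> (\<Union>u\<in>R h m j. vict h u)"

lemma R_finite: "finite (R h m j)"
  by (induction j) (auto simp: vict_finite)

lemma count_lemma:
  assumes g: "good h"
  shows "0 < N \<Longrightarrow> N \<le> real (card (R h m j)) \<Longrightarrow>
     N ^ (2 ^ j) \<le> 6 ^ (2 ^ j - 1) * (2 * real (length h) + N) ^ (2 ^ j - 1)"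
proof (induction j arbitrary: N)
  case 0
  then show ?case by simp
next
  case (Suc j)
  define Q where "Q = 2 * real (length h)"
  define P where "P = Q + N"
  define s where "s = 2 * P / N"
  define M where "M = real (card (R h m j))"
  have Q0: "Q \<ge> 0" unfolding Q_def by simp
  have NP: "N \<le> P" "Q \<le> P" "P > 0" unfolding P_def using Q0 Suc.prems by auto
  have s0: "s > 0" unfolding s_def using NP Suc.prems by simp
  define Hv where "Hv = {v \<in> R h m (Suc j). s \<le> real (deg h v)}"
  define Lt where "Lt = {v \<in> R h m (Suc j). real (deg h v) < s}"
  have fin: "finite (R h m (Suc j))" by (rule R_finite)
  have split: "card (R h m (Suc j)) = card Hv + card Lt"
  proof -
    have "R h m (Suc j) = Hv \<union> Lt" "Hv \<inter> Lt = {}" unfolding Hv_def Lt_def by auto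
    then show ?thesis using fin by (metis card_Un_disjoint finite_Un)
  qed
  have heavy: "s * real (card Hv) \<le> Q"
  proof -
    have finH: "finite Hv" using fin unfolding Hv_def by (rule finite_subset[rotated]) auto
    have "s * real (card Hv) = (\<Sum>v\<in>Hv. s)" by simp
    also have "\<dots> \<le> (\<Sum>v\<in>Hv. real (deg h v))" by (rule sum_mono) (simp add: Hv_def)
    also have "\<dots> = real (\<Sum>v\<in>Hv. deg h v)" by simp
    also have "\<dots> \<le> Q" unfolding Q_def using sum_deg[OF finH, of h] by linarith
    finally show ?thesis .
  qed
  have light: "real (card Lt) \<le> M * (1 + s)"
  proof -
    have "Lt \<subseteq> R h m j \<union> (\<Union>u\<in>R h m j. {v \<in> vict h u. real (deg h v) < s})"
      unfolding Lt_def by auto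
    then have "card Lt \<le> card (R h m j \<union> (\<Union>u\<in>R h m j. {v \<in> vict h u. real (deg h v) < s}))"
      by (intro card_mono) (auto simp: R_finite vict_finite)
    also have "\<dots> \<le> card (R h m j) + card (\<Union>u\<in>R h m j. {v \<in> vict h u. real (deg h v) < s})"
      by (rule card_Un_le)
    also have "card (\<Union>u\<in>R h m j. {v \<in> vict h u. real (deg h v) < s}) \<le> (\<Sum>u\<in>R h m j. card {v \<in> vict h u. real (deg h v) < s})"
      by (rule card_UN_le) (rule R_finite)
    finally have "real (card Lt) \<le> M + real (\<Sum>u\<in>R h m j. card {v \<in> vict h u. real (deg h v) < s})"
      unfolding M_def by linarith
    also have "real (\<Sum>u\<in>R h m j. card {v \<in> vict h u. real (deg h v) < s}) \<le> (\<Sum>u\<in>R h m j. s)"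
      unfolding of_nat_sum by (rule sum_mono) (rule vict_bound_real[OF g s0])
    also have "(\<Sum>u\<in>R h m j. s) = M * s" unfolding M_def by simp
    finally show ?thesis by (simp add: algebra_simps)
  qed
  have hv2: "real (card Hv) \<le> N / 2"
  proof -
    have "real (card Hv) \<le> Q / s" using heavy s0 by (simp add: field_simps mult.commute)
    also have "Q / s = Q * N / (2 * P)" unfolding s_def using NP Suc.prems by (simp add: field_simps)
    also have "\<dots> \<le> P * N / (2 * P)" using NP Suc.prems by (intro divide_right_mono mult_right_mono) auto
    also have "\<dots> = N / 2" using NP by simp
    finally show ?thesis .
  qed
  have "N / 2 \<le> M * (1 + s)" using Suc.prems(2) split light hv2 by simp
  also have "1 + s \<le> 3 * P / N"
    unfolding s_def using NP Suc.prems by (simp add: field_simps)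
  then have "M * (1 + s) \<le> M * (3 * P / N)" unfolding M_def by (intro mult_left_mono) auto
  finally have "N / 2 \<le> M * (3 * P / N)" .
  then have NM: "N * N \<le> 6 * P * M" using Suc.prems by (simp add: field_simps)
  define N' where "N' = N * N / (6 * P)"
  have N'pos: "0 < N'" unfolding N'_def using NP Suc.prems by simp
  have N'M: "N' \<le> real (card (R h m j))" unfolding N'_def M_def[symmetric] using NM NP
    by (simp add: field_simps mult.commute)
  have N'N: "N' \<le> N" unfolding N'_def using NP Suc.prems by (simp add: field_simps)
  have IH: "N' ^ (2 ^ j) \<le> 6 ^ (2 ^ j - 1) * (Q + N') ^ (2 ^ j - 1)"
    using Suc.IH[OF N'pos N'M] unfolding Q_def .
  also have "(Q + N') ^ (2 ^ j - 1) \<le> P ^ (2 ^ j - 1)"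
    using N'N N'pos Q0 unfolding P_def by (intro power_mono) auto
  finally have IH2: "N' ^ (2 ^ j) \<le> 6 ^ (2 ^ j - 1) * P ^ (2 ^ j - 1)" by simp
  have eqN: "N * N = 6 * P * N'" unfolding N'_def using NP by simp
  have "N ^ (2 ^ Suc j) = (N * N) ^ (2 ^ j)" by (simp add: power_mult power2_eq_square)
  also have "\<dots> = (6 * P) ^ (2 ^ j) * N' ^ (2 ^ j)" by (simp add: eqN power_mult_distrib)
  also have "\<dots> \<le> (6 * P) ^ (2 ^ j) * (6 ^ (2 ^ j - 1) * P ^ (2 ^ j - 1))"
    using IH2 NP by (intro mult_left_mono) auto
  also have "\<dots> = 6 ^ (2 ^ j + (2 ^ j - 1)) * P ^ (2 ^ j + (2 ^ j - 1))"
    unfolding power_add power_mult_distrib by (simp only: mult_ac)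
  also have "2 ^ j + (2 ^ j - 1) = 2 ^ Suc j - (1::nat)"
    using one_le_power[of 2 j] by simp
  finally show ?case unfolding P_def Q_def .
qed


lemma R_mono: "i \<le> j \<Longrightarrow> R h m i \<subseteq> R h m j"
  by (induction j) (auto simp: le_Suc_eq)

lemma m_in_R: "m \<in> R h m j"
  using R_mono[of 0 j h m] by auto

lemma R_edge: "(a,b) \<in> set h \<Longrightarrow> a \<in> R h m j \<Longrightarrow> b \<in> R h m (Suc j)"
  by (auto simp: vict_def)

definition xval :: "(nat \<times> nat) list \<Rightarrow> nat \<Rightarrow> nat \<Rightarrow> nat \<Rightarrow> real" where
  "xval h m k v = real (card {j \<in> {..k}. v \<notin> R h m j})"

lemma xval_edge:
  assumes "(a,b) \<in> set h"
  shows "xval h m k b \<le> xval h m k a + 1"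
proof -
  have "{j \<in> {..k}. b \<notin> R h m j} \<subseteq> insert 0 (Suc ` {j \<in> {..k}. a \<notin> R h m j})"
  proof
    fix j assume j: "j \<in> {j \<in> {..k}. b \<notin> R h m j}"
    show "j \<in> insert 0 (Suc ` {j \<in> {..k}. a \<notin> R h m j})"
    proof (cases j)
      case 0 then show ?thesis by simp
    next
      case (Suc j')
      then have "a \<notin> R h m j'" using j R_edge[OF assms] by auto
      then show ?thesis using Suc j by auto
    qed
  qed
  then have "card {j \<in> {..k}. b \<notin> R h m j} \<le> card (insert 0 (Suc ` {j \<in> {..k}. a \<notin> R h m j}))"
    by (intro card_mono) auto
  also have "\<dots> \<le> Suc (card (Suc ` {j \<in> {..k}. a \<notin> R h m j}))" by (simp add: card_insert_le_m1)
  also have "\<dots> \<le> Suc (card {j \<in> {..k}. a \<notin> R h m j})" by (simp add: card_image_le)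
  finally show ?thesis unfolding xval_def by simp
qed

lemma xval_m: "xval h m k m = 0"
  unfolding xval_def using m_in_R by simp

lemma xval_out: "y \<notin> R h m k \<Longrightarrow> xval h m k y = real k + 1"
proof -
  assume y: "y \<notin> R h m k"
  have "{j \<in> {..k}. y \<notin> R h m j} = {..k}"
    using y R_mono by blast
  then show ?thesis unfolding xval_def by simp
qed

lemma king:
  assumes wf: "wf_alg n A" and me: "max_error n (real k) A"
  shows "{..<n} \<subseteq> R (snd (adv A [])) (fst (adv A [])) k"
proof (rule ccontr)
  define H where "H = snd (adv A [])"
  define m where "m = fst (adv A [])"
  assume "\<not> {..<n} \<subseteq> R (snd (adv A [])) (fst (adv A [])) k"
  then obtain y where y: "y < n" "y \<notin> R H m k" unfolding H_def m_def by auto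
  define x where "x = xval H m k"
  have "run x A m (length H - length ([]::(nat\<times>nat) list))"
    unfolding H_def m_def
    by (rule adv_run) (auto simp: x_def H_def intro: xval_edge)
  then have "x m \<ge> Max (x ` {..<n}) - real k" using me unfolding max_error_def by auto
  moreover have "x y \<le> Max (x ` {..<n})" using y by simp
  ultimately show False using xval_m xval_out[OF y(2)] unfolding x_def by simp
qed

theorem mainTheorem16:
  fixes k :: nat
  assumes "k \<ge> 1"
  shows "\<exists>C > 0. \<exists>N. \<forall>n \<ge> N. \<forall>A. wf_alg n A \<and> max_error n (real k) A \<longrightarrow>
           (\<exists>x m c. run x A m c \<and>
              real c \<ge> C * real n powr (1 + 1 / (2 ^ k - 1)))"
proof (intro exI[of _ "1/24"] conjI exI[of _ "12 ^ (2 ^ k - 1) :: nat"] allI impI)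
  show "(0::real) < 1/24" by simp
  fix n A
  assume n: "12 ^ (2 ^ k - 1) \<le> n" and A: "wf_alg n A \<and> max_error n (real k) A"
  define H where "H = snd (adv A [])"
  define m where "m = fst (adv A [])"
  define K where "K = (2::nat) ^ k"
  have K2: "K \<ge> 2"
  proof -
    have "(2::nat) ^ 1 \<le> 2 ^ k" by (rule power_increasing) (use assms in auto)
    then show ?thesis unfolding K_def by simp
  qed
  have gH: "good H" unfolding H_def by (rule adv_good) simp
  have sub: "{..<n} \<subseteq> R H m k" unfolding H_def m_def using king A by blast
  have n1: "n \<ge> 1" using n by (metis le_trans one_le_numeral one_le_power)
  have "real n \<le> real (card (R H m k))"
    using card_mono[OF R_finite sub] by simp
  then have main: "real n ^ K \<le> 6 ^ (K - 1) * (2 * real (length H) + real n) ^ (K - 1)"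
    unfolding K_def using count_lemma[OF gH, of "real n" m k] n1 by simp
  define T where "T = 2 * real (length H) + real n"
  define a where "a = 1 / (real K - 1)"
  have Kr: "real K - 1 = real (K - 1)" using K2 by simp
  have a0: "a > 0" unfolding a_def using K2 by simp
  have npos: "real n > 0" using n1 by simp
  have T0: "T \<ge> 0" unfolding T_def by simp
  have "real n ^ K \<le> (6 * T) ^ (K - 1)" using main unfolding T_def power_mult_distrib .
  then have "(real n ^ K) powr a \<le> ((6 * T) ^ (K - 1)) powr a"
    by (intro powr_mono2) (use a0 in auto)
  also have "((6 * T) ^ (K - 1)) powr a = 6 * T"
  proof -
    have Tp: "6 * T > 0" unfolding T_def using npos by simp
    have "((6 * T) ^ (K - 1)) = ((6 * T) powr real (K - 1))"
      by (rule powr_realpow[symmetric]) (rule Tp)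
    then have "((6 * T) ^ (K - 1)) powr a = ((6 * T) powr real (K - 1)) powr a" by simp
    also have "\<dots> = 6 * T" unfolding powr_powr a_def using Kr K2 T0 by simp
    finally show ?thesis .
  qed
  also have "(real n ^ K) powr a = real n powr (real K * a)"
    using npos by (simp add: powr_realpow[symmetric] powr_powr)
  finally have A1: "real n powr (real K * a) \<le> 6 * T" .
  have eexp: "real K * a = 1 + a" unfolding a_def using K2 by (simp add: field_simps)
  have A2: "real n powr (1 + a) = real n * real n powr a" using npos by (simp add: powr_add)
  have "real n powr a \<ge> 12"
  proof -
    have "(12::real) = (12 ^ (K - 1)) powr a"
      unfolding a_def using Kr K2 by (simp add: powr_realpow[symmetric] powr_powr)
    also have "\<dots> \<le> real n powr a" using n a0 unfolding K_def
      by (intro powr_mono2) (auto simp: of_nat_le_iff[symmetric])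
    finally show ?thesis .
  qed
  then have A3: "real n powr (1 + a) \<ge> 12 * real n" using A2 npos by simp
  have "2 ^ k - 1 = real K - 1" unfolding K_def by simp
  then have ex: "1 + 1 / (2 ^ k - 1) = 1 + a" unfolding a_def by simp
  have c: "real (length H) \<ge> 1/24 * real n powr (1 + a)"
    using A1 A3 eexp unfolding T_def by simp
  have "run (xval H m k) A m (length H - length ([]::(nat\<times>nat) list))"
    unfolding H_def m_def by (rule adv_run) (auto simp: H_def intro: xval_edge)
  then show "\<exists>x m c. run x A m c \<and> 1/24 * real n powr (1 + 1 / (2 ^ k - 1)) \<le> real c"
    using c ex by auto
qed


end
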